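(* Let $n\ge 2$, $\delta\in(0,1)$, and let $X_{1},\dots,X_{n}\in[0,1]$ be IID real random variables with common law $F$, $X\sim F$. Then with probability at least $1-\delta$, \[ \bar{X}_{n}-\mathbb{E}_{F}X\le\sqrt{\frac{1}{3n}\log\frac{2}{\delta}}+\sqrt{\frac{2S_{n}^{2}}{3n}\log\frac{2}{\delta}}+\left(\frac{\sqrt{2}}{2}+\frac{\sqrt{42}}{6}\right)\sqrt{\frac{2}{3\lfloor n/2\rfloor n}}\log\frac{2}{\delta}, \] and the same holds (with probability at least $1-\delta$) with $\bar{X}_{n}-\mathbb{E}_{F}X$ replaced by $\mathbb{E}_{F}X-\bar{X}_{n}$.
   Context: $\bar X_n=n^{-1}\sum_{i=1}^n X_i$, $S_{n}^{2}=(n-1)^{-1}\sum_{i=1}^{n}(X_{i}-\bar{X}_{n})^{2}$ is the unbiased sample variance, $\mathbb{E}_F X$ is the mean of $X\sim F$. $\lfloor\cdot\rfloor$ is the floor function. *)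

theory Defs
  imports "HOL-Probability.Probability"
begin

definition sample_mean :: "nat \<Rightarrow> (nat \<Rightarrow> 'a \<Rightarrow> real) \<Rightarrow> 'a \<Rightarrow> real" where
  "sample_mean n X \<omega> = (\<Sum>i<n. X i \<omega>) / real n"

definition sample_var :: "nat \<Rightarrow> (nat \<Rightarrow> 'a \<Rightarrow> real) \<Rightarrow> 'a \<Rightarrow> real" where
  "sample_var n X \<omega> = (\<Sum>i<n. (X i \<omega> - sample_mean n X \<omega>)^2) / (real n - 1)"

definition emp_bernstein_bound :: "nat \<Rightarrow> real \<Rightarrow> real \<Rightarrow> real" where
  "emp_bernstein_bound n \<delta> S2 =
     sqrt (1 / (3 * real n) * ln (2 / \<delta>))
   + sqrt (2 * S2 / (3 * real n) * ln (2 / \<delta>))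
   + (sqrt 2 / 2 + sqrt 42 / 6) * sqrt (2 / (3 * real (n div 2) * real n)) * ln (2 / \<delta>)"

end

theory Submission
  imports Defs
begin


lemma ln_lower:
  fixes x l :: real
  assumes "\<bar>x\<bar> \<le> l" "l < 1"
  shows "x - x\<^sup>2 / (2 * (1 - l)) \<le> ln (1 + x)"
proof -
  define c where "c = 1 / (2 * (1 - l))"
  define h where "h = (\<lambda>x::real. ln (1 + x) - x + c * x\<^sup>2)"
  have l1: "1 - l > 0" using assms by simp
  have c2: "2 * c = 1 / (1 - l)" unfolding c_def using l1 by (simp add: divide_simps)
  have der: "DERIV h t :> (1/(1+t) - 1 + t / (1 - l))" if "\<bar>t\<bar> \<le> l" for t
  proof -
    have "1 + t > 0" using that assms by linarith
    then have "DERIV h t :> (1/(1+t) - 1 + 2 * c * t)" unfolding h_def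
      by (auto intro!: derivative_eq_intros simp: power2_eq_square field_simps)
    then show ?thesis using c2 by (simp add: mult.commute)
  qed
  have "h 0 \<le> h x"
  proof (cases "x \<ge> 0")
    case True
    show ?thesis
    proof (rule DERIV_nonneg_imp_nondecreasing[of 0 x h, OF True])
      fix t assume t: "0 \<le> t" "t \<le> x"
      have "\<bar>t\<bar> \<le> l" using t assms by linarith
      moreover have "1/(1+t) - 1 + t / (1 - l) \<ge> 0"
      proof -
        have "1/(1+t) - 1 = - t/(1+t)" using t by (simp add: field_simps)
        moreover have "t/(1+t) \<le> t/(1-l)" using t l1 assms
          by (intro divide_left_mono) auto
        ultimately show ?thesis by simp
      qed
      ultimately show "\<exists>y. DERIV h t :> y \<and> 0 \<le> y" using der by blast
    qed
  next
    case False
    show ?thesis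
    proof (rule DERIV_nonpos_imp_nonincreasing[of x 0 h])
      show "x \<le> 0" using False by simp
      fix t assume t: "x \<le> t" "t \<le> 0"
      have tl: "\<bar>t\<bar> \<le> l" using t assms by linarith
      moreover have "1/(1+t) - 1 + t / (1 - l) \<le> 0"
      proof -
        have p: "1 + t > 0" using tl assms by linarith
        have "1/(1+t) - 1 = - t/(1+t)" using p by (simp add: field_simps)
        moreover have "(-t)/(1+t) \<le> (-t)/(1-l)" using t l1 tl p
          by (intro divide_left_mono) auto
        ultimately show ?thesis by simp
      qed
      ultimately show "\<exists>y. DERIV h t :> y \<and> y \<le> 0" using der by blast
    qed
  qed
  then show ?thesis unfolding h_def c_def by simp
qed

lemma exp_lower:
  fixes x l :: real
  assumes "\<bar>x\<bar> \<le> l" "l < 1"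
  shows "exp (x - x\<^sup>2 / (2 * (1 - l))) \<le> 1 + x"
proof -
  have p: "1 + x > 0" using assms by linarith
  have "exp (x - x\<^sup>2 / (2 * (1 - l))) \<le> exp (ln (1 + x))"
    using ln_lower[OF assms] by simp
  also have "\<dots> = 1 + x" using p by simp
  finally show ?thesis .
qed

lemma key_alg:
  fixes u s D :: real
  assumes u: "0 < u" "u < 1/5" and s: "0 \<le> s" "s \<le> 1/2"
    and D: "u / sqrt 3 + sqrt (2/3) * u * s + 2 * u\<^sup>2 \<le> D" "D \<le> 1"
  shows "2 * u * D - (2 * u\<^sup>2 / (1 - 2 * u)) * (s\<^sup>2 + D\<^sup>2) \<ge> u\<^sup>2"
proof -
  define B where "B = u / sqrt 3 + sqrt (2/3) * u * s + 2 * u\<^sup>2"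
  have q1: "sqrt 3 \<le> (17321/10000)" by (rule real_le_lsqrt) (simp_all add: power2_eq_square)
  have q2: "sqrt 3 \<ge> (17302/10000)" by (rule real_le_rsqrt) (simp_all add: power2_eq_square)
  have s3: "1 / sqrt 3 \<ge> (0577/1000)" using q1 q2 by (simp add: pos_le_divide_eq)
  have s3u: "1 / sqrt 3 \<le> (0578/1000)" using q1 q2 by (simp add: pos_divide_le_eq)
  have s23: "sqrt (2/3) \<ge> (0816/1000)" by (rule real_le_rsqrt) (simp add: power2_eq_square)
  have s23u: "sqrt (2/3) \<le> (0817/1000)" by (rule real_le_lsqrt) (simp_all add: power2_eq_square)
  have Bl: "B \<ge> u * ((0577/1000) + (0816/1000) * s + 2 * u)"
  proof -
    have "u / sqrt 3 = u * (1 / sqrt 3)" by simp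
    then have "u / sqrt 3 \<ge> u * (0577/1000)" using s3 u by (metis mult_left_mono less_eq_real_def)
    moreover have "sqrt (2/3) * u * s \<ge> (0816/1000) * u * s" using s23 u s
      by (intro mult_right_mono) auto
    moreover have "u * ((0577/1000) + (0816/1000) * s + 2 * u) = u * (0577/1000) + (0816/1000) * u * s + 2 * u\<^sup>2"
      by (simp add: algebra_simps power2_eq_square)
    ultimately show ?thesis unfolding B_def by linarith
  qed
  have Bu: "B \<le> u * ((0578/1000) + (0817/1000) * s + 2 * u)"
  proof -
    have "u / sqrt 3 = u * (1 / sqrt 3)" by simp
    then have "u / sqrt 3 \<le> u * (0578/1000)" using s3u u by (metis mult_left_mono less_eq_real_def)
    moreover have "sqrt (2/3) * u * s \<le> (0817/1000) * u * s" using s23u u s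
      by (intro mult_right_mono) auto
    moreover have "u * ((0578/1000) + (0817/1000) * s + 2 * u) = u * (0578/1000) + (0817/1000) * u * s + 2 * u\<^sup>2"
      by (simp add: algebra_simps power2_eq_square)
    ultimately show ?thesis unfolding B_def by linarith
  qed
  have B0: "B \<ge> 0"
  proof -
    have "0 \<le> u * ((0577/1000) + (0816/1000) * s + 2 * u)" using u s by simp
    then show ?thesis using Bl by linarith
  qed
  have BD: "B \<le> D" using D B_def by simp
  have p: "1 - 2 * u > 0" using u by simp
  define g where "g = (\<lambda>t. 2 * t * (1 - 2*u) - 2 * u * t\<^sup>2)"
  have gmono: "g B \<le> g D"
  proof -
    have "g D - g B = (D - B) * (2 * (1 - 2*u) - 2 * u * (D + B))"
      unfolding g_def by (simp add: algebra_simps power2_eq_square)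
    moreover have "2 * u * (D + B) \<le> 2 * u * 2" using BD D u by (intro mult_left_mono) auto
    moreover have "2 * (1 - 2*u) - 2 * u * (D + B) \<ge> 0"
    proof -
      define w where "w = u * (D + B)"
      have "w \<le> u * 2" unfolding w_def using BD D u B0
        by (intro mult_left_mono) auto
      moreover have "2 * (1 - 2 * u) - 2 * u * (D + B) = 2 - 4*u - 2*w" by (simp add: w_def algebra_simps)
      ultimately show ?thesis using u by linarith
    qed
    ultimately have "g D - g B = (D - B) * (2 * (1 - 2*u) - 2 * u * (D + B))"
       "2 * (1 - 2*u) - 2 * u * (D + B) \<ge> 0" by auto
    moreover have "D - B \<ge> 0" using BD by simp
    ultimately have "g D - g B \<ge> 0" by simp
    then show ?thesis by simp
  qed
  have main: "g B - 2 * u * s\<^sup>2 \<ge> u * (1 - 2*u)"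
  proof -
    define b where "b = B / u"
    have Bb: "B = u * b" using u b_def by simp
    have bl: "b \<ge> (0577/1000) + (0816/1000) * s + 2 * u" using Bl Bb u by simp
    have bu: "b \<le> (0578/1000) + (0817/1000) * s + 2 * u" using Bu Bb u by simp
    have b14: "b \<le> (14/10)" using bu s u by linarith
    have b0: "b \<ge> 0" using bl s u by linarith
    have "g B - 2 * u * s\<^sup>2 - u * (1 - 2*u) = u * ((2*b - 1) * (1 - 2*u) - 2 * s\<^sup>2 - 2 * u\<^sup>2 * b\<^sup>2)"
      unfolding g_def Bb by (simp add: algebra_simps power2_eq_square)
    moreover have "(2*b - 1) * (1 - 2*u) - 2 * s\<^sup>2 - 2 * u\<^sup>2 * b\<^sup>2 \<ge> 0"
    proof -
      have "b\<^sup>2 \<le> (14/10)\<^sup>2" using b14 b0 by (intro power_mono) auto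
      then have "b\<^sup>2 \<le> (196/100)" by (simp add: power2_eq_square)
      then have "2 * u\<^sup>2 * b\<^sup>2 \<le> 2 * u\<^sup>2 * (196/100)" using u by (intro mult_left_mono) auto
      moreover have "s\<^sup>2 \<le> s / 2"
      proof -
        have "s * s \<le> s * (1/2)" using s by (intro mult_left_mono) auto
        then show ?thesis by (simp add: power2_eq_square)
      qed
      moreover have "(2*b - 1) * (1 - 2*u) \<ge> ((0154/1000) + (1632/1000) * s + 4 * u) * (1 - 2*u)"
        using bl p by (intro mult_right_mono) auto
      moreover have "u\<^sup>2 \<le> u / 5"
      proof -
        have "u * u \<le> u * (1/5)" using u by (intro mult_left_mono) auto
        then show ?thesis by (simp add: power2_eq_square)
      qed
      moreover have "s * u \<le> s / 5"
      proof -
        have "s * u \<le> s * (1/5)" using u s by (intro mult_left_mono) auto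
        then show ?thesis by simp
      qed
      moreover have "((0154/1000) + (1632/1000) * s + 4 * u) * (1 - 2*u) = 
          154/1000 + 1632/1000 * s + 4 * u - 308/1000 * u - 3264/1000 * (s * u) - 8 * u\<^sup>2"
        by (simp add: power2_eq_square field_simps)
      ultimately show ?thesis using s u by linarith
    qed
    ultimately have "g B - 2 * u * s\<^sup>2 - u * (1 - 2*u) \<ge> 0" using u by simp
    then show ?thesis by linarith
  qed
  have eq: "2 * u * D - (2 * u\<^sup>2 / (1 - 2 * u)) * (s\<^sup>2 + D\<^sup>2) - u\<^sup>2
      = u / (1 - 2*u) * (g D - 2 * u * s\<^sup>2 - u * (1 - 2*u))"
    using p unfolding g_def by (simp add: field_simps power2_eq_square)
  have "g D - 2 * u * s\<^sup>2 - u * (1 - 2*u) \<ge> 0" using main gmono by linarith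
  then have "u / (1 - 2*u) * (g D - 2 * u * s\<^sup>2 - u * (1 - 2*u)) \<ge> 0" using u p
    by (intro mult_nonneg_nonneg) auto
  then show ?thesis using eq by linarith
qed



lemma c_ge: "sqrt 3 \<le> sqrt 2 / 2 + sqrt 42 / 6"
proof -
  have "sqrt 3 \<le> 1.7321" by (rule real_le_lsqrt) (simp_all add: power2_eq_square)
  moreover have "sqrt 2 \<ge> 1.41" by (rule real_le_rsqrt) (simp add: power2_eq_square)
  moreover have "sqrt 42 \<ge> 6.48" by (rule real_le_rsqrt) (simp add: power2_eq_square)
  ultimately show ?thesis by simp
qed

lemma bound_ge:
  fixes n :: nat and \<delta> s S2 u :: real
  assumes n: "n \<ge> 2" and d: "0 < \<delta>" "\<delta> < 1"
    and u: "u = sqrt (ln (2 / \<delta>) / real n)" and s: "0 \<le> s" "s \<le> S2"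
  shows "u / sqrt 3 + sqrt (2/3) * u * sqrt s + 2 * u\<^sup>2 \<le> emp_bernstein_bound n \<delta> S2"
proof -
  define L where "L = ln (2 / \<delta>)"
  define N where "N = real n"
  have N: "N \<ge> 2" using n N_def by simp
  have L: "L > 0" unfolding L_def using d by simp
  have u2: "u\<^sup>2 = L / N" using u L N by (simp add: L_def N_def)
  have t1: "sqrt (1 / (3 * N) * L) = u / sqrt 3"
  proof -
    have "1 / (3 * N) * L = (L / N) / 3" by simp
    then show ?thesis using u by (simp add: real_sqrt_divide real_sqrt_mult L_def N_def mult.commute)
  qed
  have t2: "sqrt (2 * S2 / (3 * N) * L) \<ge> sqrt (2/3) * u * sqrt s"
  proof -
    have le: "2 * s / (3 * N) * L \<le> 2 * S2 / (3 * N) * L"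
      using s N L by (intro mult_right_mono divide_right_mono) auto
    have e1: "(2/3) * (L / N) * s = 2 * s / (3 * N) * L" by simp
    have "sqrt (2/3) * u * sqrt s = sqrt ((2/3) * (L / N) * s)"
      unfolding u L_def N_def by (simp only: real_sqrt_mult)
    also have "\<dots> = sqrt (2 * s / (3 * N) * L)" by (simp only: e1)
    also have "\<dots> \<le> sqrt (2 * S2 / (3 * N) * L)" using le by (simp only: real_sqrt_le_iff)
    finally show ?thesis .
  qed
  define c where "c = sqrt 2 / 2 + sqrt 42 / 6"
  define m where "m = real (n div 2)"
  have m1: "m \<ge> 1" using n unfolding m_def by auto
  have m2: "2 * m \<le> N" unfolding m_def N_def by linarith
  have c3: "c \<ge> sqrt 3" unfolding c_def by (rule c_ge)
  have cpos: "c \<ge> 0" using c3 by (smt (verit) real_sqrt_ge_zero)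
  have csq: "c\<^sup>2 \<ge> 3"
  proof -
    have "(sqrt 3)\<^sup>2 \<le> c\<^sup>2" using c3 by (intro power_mono) auto
    then show ?thesis by simp
  qed
  have t3: "c * sqrt (2 / (3 * m * N)) * L \<ge> 2 * u\<^sup>2"
  proof -
    have q: "2 / (3 * m * N) \<ge> 4 / (3 * N\<^sup>2)"
    proof -
      have "3 * m * N \<le> 3 * (N / 2) * N" using m2 N m1 by (intro mult_right_mono) auto
      then have "2 / (3 * (N / 2) * N) \<le> 2 / (3 * m * N)" using m1 N
        by (intro divide_left_mono) auto
      moreover have "2 / (3 * (N / 2) * N) = 4 / (3 * N\<^sup>2)" by (simp add: power2_eq_square)
      ultimately show ?thesis by linarith
    qed
    have "(2 / N)\<^sup>2 \<le> c\<^sup>2 * (2 / (3 * m * N))"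
    proof -
      have "(2 / N)\<^sup>2 = 3 * (4 / (3 * N\<^sup>2))" by (simp add: power2_eq_square)
      also have "\<dots> \<le> c\<^sup>2 * (2 / (3 * m * N))" using csq q N
        by (intro mult_mono) auto
      finally show ?thesis .
    qed
    then have "2 / N \<le> sqrt (c\<^sup>2 * (2 / (3 * m * N)))" by (rule real_le_rsqrt)
    also have "\<dots> = c * sqrt (2 / (3 * m * N))" using cpos by (simp only: real_sqrt_mult real_sqrt_abs abs_of_nonneg power2_eq_square[symmetric] real_sqrt_pow2_iff)
    finally have "2 / N * L \<le> c * sqrt (2 / (3 * m * N)) * L" using L by (intro mult_right_mono) auto
    then show ?thesis using u2 by simp
  qed
  show ?thesis
    unfolding emp_bernstein_bound_def
    using t1 t2 t3 unfolding L_def N_def c_def m_def by linarith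
qed



lemma var_decomp:
  fixes x :: "nat \<Rightarrow> real" and c :: real
  assumes n: "n > 0"
  defines "m \<equiv> (\<Sum>j<n. x j) / real n"
  shows "(\<Sum>i<n. (x i - c)\<^sup>2) = (\<Sum>i<n. (x i - m)\<^sup>2) + real n * (m - c)\<^sup>2"
proof -
  have z: "(\<Sum>i<n. (x i - m)) = 0" using n unfolding m_def by (simp add: sum_subtractf)
  have "(\<Sum>i<n. (x i - c)\<^sup>2) = (\<Sum>i<n. (x i - m)\<^sup>2 + 2 * (m - c) * (x i - m) + (m - c)\<^sup>2)"
    by (intro sum.cong) (auto simp: power2_eq_square algebra_simps)
  also have "\<dots> = (\<Sum>i<n. (x i - m)\<^sup>2) + 2 * (m - c) * (\<Sum>i<n. (x i - m)) + real n * (m - c)\<^sup>2"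
    by (simp add: sum.distrib sum_distrib_left)
  finally show ?thesis using z by simp
qed

lemma var_small:
  fixes x :: "nat \<Rightarrow> real"
  assumes n: "n > 0" and x: "\<And>i. i < n \<Longrightarrow> x i \<in> {0..1}"
  defines "m \<equiv> (\<Sum>j<n. x j) / real n"
  shows "(\<Sum>i<n. (x i - m)\<^sup>2) \<le> real n / 4"
proof -
  have "(\<Sum>i<n. (x i - 0)\<^sup>2) = (\<Sum>i<n. (x i - m)\<^sup>2) + real n * (m - 0)\<^sup>2"
    unfolding m_def by (rule var_decomp[OF n])
  moreover have "(\<Sum>i<n. (x i)\<^sup>2) \<le> (\<Sum>i<n. x i)"
  proof (intro sum_mono)
    fix i assume "i \<in> {..<n}"
    then have "0 \<le> x i" "x i \<le> 1" using x by auto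
    then show "(x i)\<^sup>2 \<le> x i" by (simp add: power2_eq_square mult_left_le)
  qed
  moreover have "(\<Sum>i<n. x i) = real n * m" using n unfolding m_def by simp
  moreover have "real n * m - real n * m\<^sup>2 \<le> real n / 4"
  proof -
    have "real n * m - real n * m\<^sup>2 = real n * (1/4 - (m - 1/2)\<^sup>2)"
      by (simp add: power2_eq_square algebra_simps)
    also have "\<dots> \<le> real n * (1/4)" by (intro mult_left_mono) auto
    finally show ?thesis by simp
  qed
  ultimately show ?thesis by simp
qed



lemma one_side:
  fixes M :: "'a measure" and X :: "nat \<Rightarrow> 'a \<Rightarrow> real" and n :: nat and \<delta> :: real
  assumes P: "prob_space M" and n: "n \<ge> 2" and d: "0 < \<delta>" "\<delta> < 1"
    and meas: "\<And>i. i < n \<Longrightarrow> X i \<in> borel_measurable M"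
    and ind: "prob_space.indep_vars M (\<lambda>_. borel) X {..<n}"
    and dist: "\<And>i. i < n \<Longrightarrow> distr M borel (X i) = distr M borel (X 0)"
    and rng: "\<And>i \<omega>. i < n \<Longrightarrow> \<omega> \<in> space M \<Longrightarrow> X i \<omega> \<in> {0..1}"
  shows "measure M {\<omega> \<in> space M. sample_mean n X \<omega> - prob_space.expectation M (X 0)
              \<le> emp_bernstein_bound n \<delta> (sample_var n X \<omega>)} \<ge> 1 - \<delta>"
proof -
  interpret prob_space M by (rule P)
  have n0: "0 < n" using n by simp
  define Y where "Y = X 0"
  have ax: "iid_interval_bounded_random_variables M {..<n} X Y 0 1"
  proof (rule iid_interval_bounded_random_variables.intro[OF P], rule iid_interval_bounded_random_variables_axioms.intro)
    show "finite {..<n}" by simp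
    show "indep_vars (\<lambda>_. borel) X {..<n}" by (rule ind)
    show "\<And>i. i \<in> {..<n} \<Longrightarrow> distr M borel (X i) = distr M borel Y" unfolding Y_def by (intro dist) simp
    show "random_variable borel Y" using n0 unfolding Y_def by (intro meas)
    show "AE x in M. Y x \<in> {0..1}" using rng n0 unfolding Y_def by (intro AE_I2) auto
  qed
  interpret H: Hoeffding_ineq_iid M "{..<n}" X Y 0 1 "expectation Y"
    by (rule Hoeffding_ineq_iid.intro[OF ax]) 
  define \<mu> where "\<mu> = expectation Y"
  define L where "L = ln (2/\<delta>)"
  define N where "N = real n"
  define u where "u = sqrt (L / N)"
  have L0: "L > 0" unfolding L_def using d by simp
  have N2: "N \<ge> 2" unfolding N_def using n by simp
  have u0: "u > 0" unfolding u_def using L0 N2 by simp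
  have u2: "u\<^sup>2 = L / N" unfolding u_def using L0 N2 by simp
  have expL: "exp (- L) = \<delta> / 2" unfolding L_def using d by (simp add: exp_minus)
  have intX: "integrable M (X i)" if "i < n" for i
    using that rng meas by (intro integrable_const_bound[where B=1]) (auto intro!: AE_I2)
  have EX: "expectation (X i) = \<mu>" if "i < n" for i
    using that unfolding \<mu>_def by simp
  have mu0: "0 \<le> \<mu>" unfolding \<mu>_def Y_def using rng n0 by (intro integral_nonneg_AE AE_I2) auto
  have mu1: "\<mu> \<le> 1"
  proof -
    have "\<mu> \<le> expectation (\<lambda>_. 1::real)" unfolding \<mu>_def Y_def
      using rng n0 intX[OF n0] by (intro integral_mono) auto
    then show ?thesis using prob_space by simp
  qed
  have [measurable]: "X i \<in> borel_measurable M" if "i \<in> {..<n}" for i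
    using meas that by simp
  define G where "G = {\<omega> \<in> space M. sample_mean n X \<omega> - \<mu>
              \<le> emp_bernstein_bound n \<delta> (sample_var n X \<omega>)}"
  have m1[measurable]: "(\<lambda>\<omega>. sample_mean n X \<omega>) \<in> borel_measurable M"
    unfolding sample_mean_def by measurable
  have m2[measurable]: "(\<lambda>\<omega>. sample_var n X \<omega>) \<in> borel_measurable M"
    unfolding sample_var_def by measurable
  have m3[measurable]: "(\<lambda>\<omega>. emp_bernstein_bound n \<delta> (sample_var n X \<omega>)) \<in> borel_measurable M"
    unfolding emp_bernstein_bound_def by measurable
  have Gm: "G \<in> sets M"
    unfolding G_def by measurable
  have mean01: "0 \<le> sample_mean n X \<omega> \<and> sample_mean n X \<omega> \<le> 1" if "\<omega> \<in> space M" for \<omega>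
  proof -
    have "(\<Sum>i<n. X i \<omega>) \<le> (\<Sum>i<n. 1)" using rng that by (intro sum_mono) auto
    moreover have "(\<Sum>i<n. X i \<omega>) \<ge> 0" using rng that by (intro sum_nonneg) auto
    ultimately show ?thesis unfolding sample_mean_def using n0 by (simp add: divide_le_eq)
  qed
  define SS where "SS = (\<lambda>\<omega>. (\<Sum>i<n. (X i \<omega> - sample_mean n X \<omega>)\<^sup>2))"
  have SS0: "0 \<le> SS \<omega>" for \<omega> unfolding SS_def by (intro sum_nonneg) auto
  have SS1: "SS \<omega> \<le> N / 4" if "\<omega> \<in> space M" for \<omega>
    unfolding SS_def sample_mean_def N_def using var_small[OF n0, of "\<lambda>i. X i \<omega>"] rng that by simp
  have varge: "SS \<omega> / N \<le> sample_var n X \<omega>" for \<omega>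
  proof -
    have "SS \<omega> / N \<le> SS \<omega> / (N - 1)" using N2 SS0 by (intro divide_left_mono) auto
    then show ?thesis unfolding sample_var_def SS_def N_def by simp
  qed
  have bnd: "u / sqrt 3 + sqrt (2/3) * u * sqrt (SS \<omega> / N) + 2 * u\<^sup>2
        \<le> emp_bernstein_bound n \<delta> (sample_var n X \<omega>)" for \<omega>
    by (rule bound_ge[OF n d]) (use varge SS0 N2 in \<open>auto simp: u_def L_def N_def\<close>)
  have key: "\<exists>Bad \<in> events. space M - G \<subseteq> Bad \<and> prob Bad \<le> \<delta>"
  proof (cases "u < 1/5")
    case False
    define \<epsilon> where "\<epsilon> = u / sqrt 3 + 2 * u\<^sup>2"
    have e0: "\<epsilon> \<ge> 0" using u0 by (simp add: \<epsilon>_def)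
    define Bad where "Bad = {x\<in>space M. (\<Sum>i\<in>{..<n}. X i x) / real (card {..<n}) \<ge> \<mu> + \<epsilon>}"
    have pB: "prob Bad \<le> exp (- 2 * real (card {..<n}) * \<epsilon>\<^sup>2 / (1 - 0)\<^sup>2)"
      unfolding Bad_def \<mu>_def using H.Hoeffding_ineq_ge'[OF e0] n0 by (simp add: lessThan_empty_iff)
    have "2 * \<epsilon>\<^sup>2 \<ge> u\<^sup>2"
    proof -
      have "sqrt 3 \<le> 2" by (rule real_le_lsqrt) auto
      then have "u / sqrt 3 \<ge> u / 2" using u0 by (intro divide_left_mono) auto
      then have "\<epsilon> \<ge> u / 2 + 2 * u * u" unfolding \<epsilon>_def by (simp add: power2_eq_square)
      moreover have "2 * u * u \<ge> 2 * u * (1/5)" using False u0 by (intro mult_left_mono) auto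
      ultimately have "\<epsilon> \<ge> u * (9/10)" by simp
      then have "\<epsilon>\<^sup>2 \<ge> (u * (9/10))\<^sup>2" using u0 by (intro power_mono) auto
      then show ?thesis by (simp add: power2_eq_square) (smt (verit) mult_nonneg_nonneg zero_le_square)
    qed
    then have "2 * N * \<epsilon>\<^sup>2 \<ge> L" using u2 N2 by (simp add: field_simps)
    then have "exp (- 2 * real (card {..<n}) * \<epsilon>\<^sup>2 / (1 - 0)\<^sup>2) \<le> exp (- L)"
      unfolding N_def by simp
    then have "prob Bad \<le> \<delta>" using pB expL d by simp
    moreover have "Bad \<in> events" unfolding Bad_def by measurable
    moreover have "space M - G \<subseteq> Bad"
    proof
      fix x assume x: "x \<in> space M - G"
      then have "sample_mean n X x - \<mu> > emp_bernstein_bound n \<delta> (sample_var n X x)"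
        unfolding G_def by auto
      moreover have "emp_bernstein_bound n \<delta> (sample_var n X x) \<ge> \<epsilon>"
      proof -
        have "0 \<le> sqrt (2/3) * u * sqrt (SS x / N)" using u0 SS0 N2 by simp
        then show ?thesis using bnd[of x] unfolding \<epsilon>_def by linarith
      qed
      ultimately show "x \<in> Bad" using x unfolding Bad_def sample_mean_def by simp
    qed
    ultimately show ?thesis by blast
  next
    case True
    define lam where "lam = 2 * u"
    define a where "a = 2 * u\<^sup>2 / (1 - 2 * u)"
    define phi where "phi = (\<lambda>y. lam * (y - \<mu>) - a * (y - \<mu>)\<^sup>2)"
    define Z where "Z = (\<lambda>x. \<Sum>i<n. phi (X i x))"
    define Bad where "Bad = {x\<in>space M. L \<le> Z x}"
    have [measurable]: "phi \<in> borel_measurable borel" unfolding phi_def by measurable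
    have Zm[measurable]: "Z \<in> borel_measurable M" unfolding Z_def by measurable
    have Bm: "Bad \<in> events" unfolding Bad_def by measurable
    have lam1: "lam < 1" "0 < lam" using True u0 unfolding lam_def by auto
    have phi_le: "exp (phi y) \<le> 1 + lam * (y - \<mu>)" if "y \<in> {0..1}" for y
    proof -
      have "\<bar>y - \<mu>\<bar> \<le> 1" using that mu0 mu1 by auto
      then have "\<bar>lam * (y - \<mu>)\<bar> \<le> lam" using lam1
        by (simp add: abs_mult mult_left_le)
      from exp_lower[OF this lam1(1)]
      have "exp (lam * (y - \<mu>) - (lam * (y - \<mu>))\<^sup>2 / (2 * (1 - lam))) \<le> 1 + lam * (y - \<mu>)" .
      moreover have "(lam * (y - \<mu>))\<^sup>2 / (2 * (1 - lam)) = a * (y - \<mu>)\<^sup>2"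
        unfolding a_def lam_def using True by (simp add: power2_eq_square field_simps)
      ultimately show ?thesis unfolding phi_def by simp
    qed
    have fac: "(\<integral>\<^sup>+x. ennreal (exp (phi (X i x))) \<partial>M) \<le> 1" if i: "i < n" for i
    proof -
      have "(\<integral>\<^sup>+x. ennreal (exp (phi (X i x))) \<partial>M) \<le> (\<integral>\<^sup>+x. ennreal (1 + lam * (X i x - \<mu>)) \<partial>M)"
        using phi_le rng i by (intro nn_integral_mono) (auto intro: ennreal_leI)
      also have "\<dots> = ennreal (expectation (\<lambda>x. 1 + lam * (X i x - \<mu>)))"
      proof (rule nn_integral_eq_integral)
        show "integrable M (\<lambda>x. 1 + lam * (X i x - \<mu>))" using intX[OF i] by simp
        show "AE x in M. 0 \<le> 1 + lam * (X i x - \<mu>)"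
        proof (rule AE_I2)
          fix x assume "x \<in> space M"
          then have "\<bar>X i x - \<mu>\<bar> \<le> 1" using rng[OF i] mu0 mu1 by fastforce
          then have "\<bar>lam * (X i x - \<mu>)\<bar> \<le> 1" using lam1 
            by (simp add: abs_mult) (smt (verit) mult_left_le)
          then show "0 \<le> 1 + lam * (X i x - \<mu>)" by linarith
        qed
      qed
      also have "expectation (\<lambda>x. 1 + lam * (X i x - \<mu>)) = 1"
        using intX[OF i] EX[OF i] prob_space by simp
      finally show ?thesis by simp
    qed
    have ch: "emeasure M {x\<in>space M. Z x \<ge> L} \<le>
        ennreal (exp (-1 * L)) * (\<integral>\<^sup>+x. ennreal (exp (1 * Z x)) * indicator (space M) x \<partial>M)"
      by (rule Chernoff_ineq_nn_integral_ge) auto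
    have "(\<integral>\<^sup>+x. ennreal (exp (1 * Z x)) * indicator (space M) x \<partial>M)
        = (\<integral>\<^sup>+x. (\<Prod>i\<in>{..<n}. ennreal (exp (phi (X i x)))) \<partial>M)"
      by (intro nn_integral_cong) (simp add: Z_def exp_sum prod_ennreal)
    also have "\<dots> = (\<Prod>i\<in>{..<n}. \<integral>\<^sup>+x. ennreal (exp (phi (X i x))) \<partial>M)"
      by (intro indep_vars_nn_integral indep_vars_compose2[OF ind]) auto
    also have "\<dots> \<le> (\<Prod>i\<in>{..<n}. 1)"
      by (intro prod_mono_ennreal fac) simp
    finally have I1: "(\<integral>\<^sup>+x. ennreal (exp (1 * Z x)) * indicator (space M) x \<partial>M) \<le> 1" by simp
    have "emeasure M Bad \<le> ennreal (exp (-1 * L)) * 1"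
      unfolding Bad_def using ch I1 by (meson mult_left_mono order_trans zero_le)
    then have "emeasure M Bad \<le> ennreal (exp (- L))" by simp
    then have "prob Bad \<le> exp (- L)" by (simp add: emeasure_eq_measure)
    then have "prob Bad \<le> \<delta>" using expL d by simp
    moreover have "space M - G \<subseteq> Bad"
    proof
      fix x assume x: "x \<in> space M - G"
      define D where "D = sample_mean n X x - \<mu>"
      define \<sigma> where "\<sigma> = sqrt (SS x / N)"
      have Dgt: "D > emp_bernstein_bound n \<delta> (sample_var n X x)"
        using x unfolding G_def D_def by auto
      have D1: "D \<le> 1" using mean01[of x] x mu0 unfolding D_def by auto
      have s0: "0 \<le> \<sigma>" unfolding \<sigma>_def using SS0[of x] N2 by simp
      have s1: "\<sigma> \<le> 1/2"
      proof -
        have "SS x / N \<le> (1/2)\<^sup>2" using SS1[of x] x N2 by (simp add: field_simps power2_eq_square)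
        then show ?thesis unfolding \<sigma>_def by (intro real_le_lsqrt) auto
      qed
      have s2: "\<sigma>\<^sup>2 = SS x / N" unfolding \<sigma>_def using SS0 N2 by simp
      have BD: "u / sqrt 3 + sqrt (2/3) * u * \<sigma> + 2 * u\<^sup>2 \<le> D"
        using bnd[of x] Dgt unfolding \<sigma>_def by linarith
      have ka: "2 * u * D - (2 * u\<^sup>2 / (1 - 2 * u)) * (\<sigma>\<^sup>2 + D\<^sup>2) \<ge> u\<^sup>2"
        by (rule key_alg[OF u0 True s0 s1 BD D1])
      have sum1: "(\<Sum>i<n. (X i x - \<mu>)) = N * D"
        using n0 unfolding D_def sample_mean_def N_def by (simp add: sum_subtractf field_simps)
      have sum2: "(\<Sum>i<n. (X i x - \<mu>)\<^sup>2) = SS x + N * D\<^sup>2"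
        unfolding SS_def D_def N_def sample_mean_def by (rule var_decomp[OF n0])
      have "Z x = (\<Sum>i<n. lam * (X i x - \<mu>)) - (\<Sum>i<n. a * (X i x - \<mu>)\<^sup>2)"
        unfolding Z_def phi_def by (rule sum_subtractf)
      also have "\<dots> = lam * (\<Sum>i<n. (X i x - \<mu>)) - a * (\<Sum>i<n. (X i x - \<mu>)\<^sup>2)"
        by (simp only: sum_distrib_left)
      also have "\<dots> = N * (2 * u * D - (2 * u\<^sup>2 / (1 - 2 * u)) * (\<sigma>\<^sup>2 + D\<^sup>2))"
        unfolding sum1 sum2 s2 lam_def a_def using N2 True u0 by (simp add: field_simps)
      also have "\<dots> \<ge> N * u\<^sup>2" using ka N2 by (intro mult_left_mono) auto
      finally have "Z x \<ge> L" using u2 N2 by simp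
      then show "x \<in> Bad" using x unfolding Bad_def by simp
    qed
    ultimately show ?thesis using Bm by blast
  qed
  then obtain Bad where Bad: "Bad \<in> events" "space M - G \<subseteq> Bad" "prob Bad \<le> \<delta>" by blast
  have "prob (space M - G) \<le> prob Bad" using Bad by (intro finite_measure_mono) auto
  then have "1 - prob G \<le> \<delta>" using prob_compl[OF Gm] Bad by simp
  then show ?thesis unfolding G_def \<mu>_def Y_def by simp
qed



theorem mainTheorem11:
  fixes M :: "'a measure" and X :: "nat \<Rightarrow> 'a \<Rightarrow> real" and n :: nat and \<delta> :: real
  assumes "prob_space M"
    and "n \<ge> 2"
    and "0 < \<delta>" and "\<delta> < 1"
    and "\<And>i. i < n \<Longrightarrow> X i \<in> borel_measurable M"
    and "prob_space.indep_vars M (\<lambda>_. borel) X {..<n}"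
    and "\<And>i. i < n \<Longrightarrow> distr M borel (X i) = distr M borel (X 0)"
    and "\<And>i \<omega>. i < n \<Longrightarrow> \<omega> \<in> space M \<Longrightarrow> X i \<omega> \<in> {0..1}"
  shows "measure M {\<omega> \<in> space M.
            sample_mean n X \<omega> - prob_space.expectation M (X 0)
              \<le> emp_bernstein_bound n \<delta> (sample_var n X \<omega>)} \<ge> 1 - \<delta>
       \<and> measure M {\<omega> \<in> space M.
            prob_space.expectation M (X 0) - sample_mean n X \<omega>
              \<le> emp_bernstein_bound n \<delta> (sample_var n X \<omega>)} \<ge> 1 - \<delta>"
proof
  show "measure M {\<omega> \<in> space M.
            sample_mean n X \<omega> - prob_space.expectation M (X 0)
              \<le> emp_bernstein_bound n \<delta> (sample_var n X \<omega>)} \<ge> 1 - \<delta>"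
    by (rule one_side[OF assms])
next
  interpret prob_space M by (rule assms(1))
  have n0: "0 < n" using assms(2) by simp
  define X' where "X' = (\<lambda>i \<omega>. 1 - X i \<omega>)"
  have dX': "distr M borel (X' i) = distr M borel (X' 0)" if i: "i < n" for i
  proof -
    have "distr M borel (X' i) = distr (distr M borel (X i)) borel (\<lambda>y. 1 - y)"
      using assms(5)[OF i] by (subst distr_distr) (auto simp: X'_def comp_def)
    also have "\<dots> = distr (distr M borel (X 0)) borel (\<lambda>y. 1 - y)" using assms(7)[OF i] by simp
    also have "\<dots> = distr M borel (X' 0)"
      using assms(5)[OF n0] by (subst distr_distr) (auto simp: X'_def comp_def)
    finally show ?thesis .
  qed
  have indX': "indep_vars (\<lambda>_. borel) X' {..<n}"
    unfolding X'_def
    using indep_vars_compose2[OF assms(6), of "\<lambda>_ y. 1 - y" "\<lambda>_. borel"] by simp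
  have os: "measure M {\<omega> \<in> space M. sample_mean n X' \<omega> - expectation (X' 0)
              \<le> emp_bernstein_bound n \<delta> (sample_var n X' \<omega>)} \<ge> 1 - \<delta>"
  proof (rule one_side)
    show "prob_space M" by (rule assms(1))
    show "2 \<le> n" "0 < \<delta>" "\<delta> < 1" using assms(2,3,4) by auto
    show "\<And>i. i < n \<Longrightarrow> X' i \<in> borel_measurable M" unfolding X'_def using assms(5) by simp
    show "indep_vars (\<lambda>_. borel) X' {..<n}" by (rule indX')
    show "\<And>i. i < n \<Longrightarrow> distr M borel (X' i) = distr M borel (X' 0)" by (rule dX')
    show "\<And>i \<omega>. i < n \<Longrightarrow> \<omega> \<in> space M \<Longrightarrow> X' i \<omega> \<in> {0..1}"
      unfolding X'_def using assms(8) by fastforce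
  qed
  have intX0: "integrable M (X 0)"
    using assms(8)[OF n0] assms(5)[OF n0] by (intro integrable_const_bound[where B=1]) (auto intro!: AE_I2)
  have E': "expectation (X' 0) = 1 - expectation (X 0)"
    unfolding X'_def using intX0 prob_space by simp
  have sm: "sample_mean n X' \<omega> = 1 - sample_mean n X \<omega>" for \<omega>
    unfolding sample_mean_def X'_def using n0 by (simp add: sum_subtractf field_simps)
  have sv: "sample_var n X' \<omega> = sample_var n X \<omega>" for \<omega>
  proof -
    have "(\<Sum>i<n. (X' i \<omega> - sample_mean n X' \<omega>)\<^sup>2) = (\<Sum>i<n. (X i \<omega> - sample_mean n X \<omega>)\<^sup>2)"
    proof (intro sum.cong refl)
      fix i
      have "X' i \<omega> - sample_mean n X' \<omega> = -(X i \<omega> - sample_mean n X \<omega>)"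
        using sm[of \<omega>] by (simp add: X'_def)
      then show "(X' i \<omega> - sample_mean n X' \<omega>)\<^sup>2 = (X i \<omega> - sample_mean n X \<omega>)\<^sup>2" by (simp add: power2_commute)
    qed
    then show ?thesis unfolding sample_var_def by simp
  qed
  show "measure M {\<omega> \<in> space M.
            prob_space.expectation M (X 0) - sample_mean n X \<omega>
              \<le> emp_bernstein_bound n \<delta> (sample_var n X \<omega>)} \<ge> 1 - \<delta>"
    using os unfolding E' sm sv by simp
qed

end
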